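(* Let $X$ be a locally compact space and $\kappa$ an infinite cardinal. Then $\mathcal{K}(X)$ has calibre $(\kappa^+,\omega)$ if and only if $e(\mathcal{K}(X))\le\kappa$.
   Context: All spaces are Tychonoff. $\mathcal{K}(X)$ is the set of compact subsets of $X$ ordered by inclusion and equipped with the Vietoris topology. A directed set $P$ has calibre $(\mu,\lambda)$ if every subset of $P$ of size $\mu$ contains a subset of size $\lambda$ with an upper bound in $P$. The extent $e(Y)$ is the supremum of cardinalities of closed discrete subsets of $Y$. *)

theory Defs
  imports "HOL-Analysis.Analysis"
begin

text \<open>Compact subsets of X (including the empty set), ordered by inclusion.\<close>
definition compacts :: "'a topology \<Rightarrow> 'a set set" where
  "compacts X = {K. compactin X K}"

definition vietoris :: "'a topology \<Rightarrow> 'a set topology" where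
  "vietoris X = topology_generated_by
     ({{K \<in> compacts X. K \<subseteq> U} | U. openin X U} \<union>
      {{K \<in> compacts X. K \<inter> U \<noteq> {}} | U. openin X U})"

text \<open>Calibre \<open>(\<kappa>\<^sup>+,\<omega>)\<close> of a directed set (P, \<subseteq>) with \<open>\<kappa> = |C|\<close>: every subset of size
  \<open>\<kappa>\<^sup>+\<close> contains a countably infinite subset with an upper bound in P.\<close>
definition calibre_succ_omega :: "'b set set \<Rightarrow> 'k set \<Rightarrow> bool" where
  "calibre_succ_omega P C \<longleftrightarrow>
     (\<forall>S \<subseteq> P. ordIso2 (card_of S) (cardSuc (card_of C)) \<longrightarrow>
        (\<exists>T \<subseteq> S. infinite T \<and> countable T \<and> (\<exists>u \<in> P. \<forall>t \<in> T. t \<subseteq> u)))"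

definition closed_discrete_in :: "'a topology \<Rightarrow> 'a set \<Rightarrow> bool" where
  "closed_discrete_in Y D \<longleftrightarrow> closedin Y D \<and>
     (\<forall>d \<in> D. \<exists>U. openin Y U \<and> U \<inter> D = {d})"

definition extent_le :: "'a topology \<Rightarrow> 'k set \<Rightarrow> bool" where
  "extent_le Y C \<longleftrightarrow> (\<forall>D. closed_discrete_in Y D \<longrightarrow> ordLeq2 (card_of D) (card_of C))"

end

theory Submission
  imports Defs
begin

definition vsub :: "'a topology \<Rightarrow> 'a set set set" where
  "vsub X = ({{K \<in> compacts X. K \<subseteq> U} | U. openin X U} \<union>
      {{K \<in> compacts X. K \<inter> U \<noteq> {}} | U. openin X U})"

lemma vietoris_vsub: "vietoris X = topology_generated_by (vsub X)"
  by (simp add: vietoris_def vsub_def)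

lemma Union_vsub: "\<Union>(vsub X) = compacts X"
proof
  show "\<Union>(vsub X) \<subseteq> compacts X" unfolding vsub_def by auto
  show "compacts X \<subseteq> \<Union>(vsub X)"
  proof
    fix K assume K: "K \<in> compacts X"
    then have "K \<subseteq> topspace X" by (simp add: compacts_def compactin_subset_topspace)
    then have "K \<in> {K \<in> compacts X. K \<subseteq> topspace X}" using K by auto
    moreover have "{K \<in> compacts X. K \<subseteq> topspace X} \<in> vsub X"
      unfolding vsub_def by blast
    ultimately show "K \<in> \<Union>(vsub X)" by blast
  qed
qed

lemma topspace_vietoris [simp]: "topspace (vietoris X) = compacts X"
  by (simp add: vietoris_vsub Union_vsub)

lemma openin_vietoris_upper:
  "openin X U \<Longrightarrow> openin (vietoris X) {K \<in> compacts X. K \<subseteq> U}"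
  unfolding vietoris_vsub by (rule topology_generated_by_Basis) (auto simp: vsub_def)

lemma openin_vietoris_lower:
  "openin X U \<Longrightarrow> openin (vietoris X) {K \<in> compacts X. K \<inter> U \<noteq> {}}"
  unfolding vietoris_vsub by (rule topology_generated_by_Basis) (auto simp: vsub_def)

lemma generated_subbase:
  "topology_generated_by B =
   topology (arbitrary union_of (finite intersection_of (\<lambda>x. x \<in> B) relative_to \<Union>B))"
proof -
  have "topology_generated_by B = topology (arbitrary union_of (finite' intersection_of (\<lambda>x. x \<in> B)))"
    by (simp add: generate_topology_on_eq)
  also have "\<dots> = topology (arbitrary union_of (finite intersection_of (\<lambda>x. x \<in> B) relative_to \<Union>B))"
  proof (rule topology_bases_eq)
    fix U x assume U: "(finite' intersection_of (\<lambda>x. x \<in> B)) U" and "x \<in> U"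
    then obtain F where F: "finite F" "F \<noteq> {}" "F \<subseteq> B" "\<Inter>F = U"
      unfolding intersection_of_def by auto
    have "\<Inter>F \<subseteq> \<Union>B" using F by blast
    then have "(finite intersection_of (\<lambda>x. x \<in> B) relative_to \<Union>B) U"
      using F unfolding relative_to_def intersection_of_def
      by (rule_tac x=U in exI) auto
    then show "\<exists>V. (finite intersection_of (\<lambda>x. x \<in> B) relative_to \<Union>B) V \<and> x \<in> V \<and> V \<subseteq> U"
      using \<open>x \<in> U\<close> by blast
  next
    fix V x assume V: "(finite intersection_of (\<lambda>x. x \<in> B) relative_to \<Union>B) V" and x: "x \<in> V"
    then obtain F where F: "finite F" "F \<subseteq> B" "V = \<Union>B \<inter> \<Inter>F"
      unfolding intersection_of_def relative_to_def by auto
    show "\<exists>U. (finite' intersection_of (\<lambda>x. x \<in> B)) U \<and> x \<in> U \<and> U \<subseteq> V"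
    proof (cases "F = {}")
      case True
      then obtain b where b: "b \<in> B" "x \<in> b" using x F by auto
      have "(finite' intersection_of (\<lambda>x. x \<in> B)) b"
        unfolding intersection_of_def using b by (rule_tac x="{b}" in exI) auto
      then show ?thesis using b F True by (rule_tac x=b in exI) auto
    next
      case False
      have "(finite' intersection_of (\<lambda>x. x \<in> B)) (\<Inter>F)"
        unfolding intersection_of_def using F False by auto
      moreover have "V = \<Inter>F" using F False by auto
      ultimately show ?thesis using x by blast
    qed
  qed
  finally show ?thesis .
qed

lemma subtop_subbase:
  assumes "S \<subseteq> U"
  shows "subtopology (topology (arbitrary union_of (finite intersection_of P relative_to U))) S
       = topology (arbitrary union_of (finite intersection_of P relative_to S))"
proof -
  let ?Q = "arbitrary union_of (finite intersection_of P relative_to U)"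
  have "(\<lambda>T. \<exists>S'. T = S' \<inter> S \<and> openin (topology ?Q) S') = (?Q relative_to S)"
    unfolding openin_subbase by (auto simp: relative_to_def Int_commute)
  also have "\<dots> = arbitrary union_of (finite intersection_of P relative_to S)"
    using assms by (simp add: arbitrary_union_of_relative_to Int_absorb1)
  finally show ?thesis unfolding subtopology_def by simp
qed

lemma subtopology_vietoris:
  assumes "S \<subseteq> compacts X"
  shows "subtopology (vietoris X) S
       = topology (arbitrary union_of (finite intersection_of (\<lambda>x. x \<in> vsub X) relative_to S))"
  using subtop_subbase[OF assms[folded Union_vsub], of "\<lambda>x. x \<in> vsub X"]
  by (simp add: vietoris_vsub generated_subbase[of "vsub X"])


lemma compactin_vietoris_below:
  assumes u: "compactin X u"
  shows "compactin (vietoris X) {K \<in> compacts X. K \<subseteq> u}"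
proof -
  let ?S = "{K \<in> compacts X. K \<subseteq> u}"
  have Ssub: "?S \<subseteq> compacts X" by auto
  have "compact_space (subtopology (vietoris X) ?S)"
  proof (rule Alexander_subbase_alt[where \<B> = "vsub X" and U = ?S])
    show "?S \<subseteq> \<Union>(vsub X)" by (simp add: Union_vsub)
  next
    show "topology (arbitrary union_of (finite intersection_of (\<lambda>x. x \<in> vsub X) relative_to ?S))
          = subtopology (vietoris X) ?S"
      by (rule subtopology_vietoris[symmetric]) auto
  next
    fix C assume Csub: "C \<subseteq> vsub X" and cov: "?S \<subseteq> \<Union>C"
    define \<W> where "\<W> = {W. openin X W \<and> {K \<in> compacts X. K \<inter> W \<noteq> {}} \<in> C}"
    define V where "V = \<Union>\<W>"
    have oV: "openin X V" unfolding V_def \<W>_def by auto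
    define L where "L = u - V"
    have "L = (topspace X - V) \<inter> u" unfolding L_def using compactin_subset_topspace[OF u] by auto
    then have cL: "compactin X L" using oV u by (simp add: closed_Int_compactin closedin_diff)
    then have "L \<in> ?S" unfolding L_def compacts_def by auto
    then obtain c where c: "c \<in> C" "L \<in> c" using cov by blast
    then have "c \<in> vsub X" using Csub by auto
    then consider W0 where "openin X W0" "c = {K \<in> compacts X. K \<subseteq> W0}"
      | W where "openin X W" "c = {K \<in> compacts X. K \<inter> W \<noteq> {}}"
      unfolding vsub_def by auto
    then obtain W0 where W0: "openin X W0" "c = {K \<in> compacts X. K \<subseteq> W0}"
    proof cases
      case 2
      then have "W \<in> \<W>" using c unfolding \<W>_def by auto
      then have "W \<subseteq> V" unfolding V_def by auto
      then have False using c 2 unfolding L_def by auto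
      then show ?thesis by blast
    qed
    have LW0: "L \<subseteq> W0" using c W0 by auto
    define M where "M = (topspace X - W0) \<inter> u"
    have cM: "compactin X M" unfolding M_def using W0 u by (simp add: closed_Int_compactin closedin_diff)
    have "M \<subseteq> \<Union>\<W>" using LW0 unfolding M_def L_def V_def by auto
    moreover have "\<forall>W \<in> \<W>. openin X W" unfolding \<W>_def by auto
    ultimately obtain F where F: "finite F" "F \<subseteq> \<W>" "M \<subseteq> \<Union>F"
      using cM unfolding compactin_def by meson
    define C' where "C' = insert c ((\<lambda>W. {K \<in> compacts X. K \<inter> W \<noteq> {}}) ` F)"
    have "finite C'" unfolding C'_def using F by auto
    moreover have "C' \<subseteq> C" unfolding C'_def using F c \<W>_def by auto
    moreover have "?S \<subseteq> \<Union>C'"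
    proof
      fix K assume K: "K \<in> ?S"
      show "K \<in> \<Union>C'"
      proof (cases "K \<subseteq> W0")
        case True
        then show ?thesis using K W0 unfolding C'_def by auto
      next
        case False
        then obtain x where x: "x \<in> K" "x \<notin> W0" by auto
        have "K \<subseteq> topspace X" using K by (auto simp: compacts_def compactin_subset_topspace)
        then have "x \<in> M" using x K unfolding M_def by auto
        then obtain W where "W \<in> F" "x \<in> W" using F by auto
        then show ?thesis using K x unfolding C'_def by auto
      qed
    qed
    ultimately show "\<exists>C'. finite C' \<and> C' \<subseteq> C \<and> ?S \<subseteq> \<Union>C'" by blast
  qed
  then show ?thesis by (simp add: compactin_subspace)
qed

lemma closed_discrete_subset:
  assumes "closed_discrete_in Y D" "S \<subseteq> D"
  shows "closed_discrete_in Y S"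
proof -
  have cD: "closedin Y D" and dD: "\<And>d. d \<in> D \<Longrightarrow> \<exists>U. openin Y U \<and> U \<inter> D = {d}"
    using assms(1) unfolding closed_discrete_in_def by auto
  have "openin Y (topspace Y - S)"
  proof (subst openin_subopen, intro ballI)
    fix x assume x: "x \<in> topspace Y - S"
    show "\<exists>T. openin Y T \<and> x \<in> T \<and> T \<subseteq> topspace Y - S"
    proof (cases "x \<in> D")
      case False
      then show ?thesis using x cD assms(2) by (rule_tac x="topspace Y - D" in exI) (auto simp: closedin_def)
    next
      case True
      then obtain U where U: "openin Y U" "U \<inter> D = {x}" using dD by blast
      then show ?thesis using x assms(2) openin_subset[OF U(1)] by (rule_tac x=U in exI) auto
    qed
  qed
  moreover have "S \<subseteq> topspace Y" using assms(2) closedin_subset[OF cD] by (rule order_trans)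
  moreover have "\<exists>U. openin Y U \<and> U \<inter> S = {d}" if "d \<in> S" for d
  proof -
    have "d \<in> D" using that assms(2) by blast
    then obtain U where U: "openin Y U" "U \<inter> D = {d}" using dD by blast
    have "U \<inter> S = {d}" using U(2) assms(2) that by blast
    then show ?thesis using U(1) by blast
  qed
  ultimately show ?thesis unfolding closed_discrete_in_def closedin_def by simp
qed

lemma closed_discrete_compact_finite:
  assumes "closed_discrete_in Y T" "T \<subseteq> A" "compactin Y A"
  shows "finite T"
proof -
  have cT: "compactin Y T" using assms closed_compactin unfolding closed_discrete_in_def by blast
  have "\<forall>d \<in> T. \<exists>U. openin Y U \<and> U \<inter> T = {d}" using assms(1) unfolding closed_discrete_in_def by blast
  then obtain g where g: "\<And>d. d \<in> T \<Longrightarrow> openin Y (g d) \<and> g d \<inter> T = {d}" by metis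
  have "T \<subseteq> \<Union>(g ` T)" using g by blast
  then obtain F where F: "finite F" "F \<subseteq> g ` T" "T \<subseteq> \<Union>F"
    using cT g unfolding compactin_def by (metis imageE)
  then obtain T' where T': "T' \<subseteq> T" "finite T'" "F = g ` T'" by (meson finite_subset_image)
  have "T \<subseteq> T'"
  proof
    fix x assume "x \<in> T"
    then obtain d where "d \<in> T'" "x \<in> g d" using F T' by auto
    moreover have "d \<in> T" using \<open>d \<in> T'\<close> T'(1) by blast
    ultimately have "x = d" using g[of d] \<open>x \<in> T\<close> by blast
    then show "x \<in> T'" using \<open>d \<in> T'\<close> by simp
  qed
  then show ?thesis using T' finite_subset by blast
qed

lemma t1_vietoris:
  assumes "Hausdorff_space X"
  shows "t1_space (vietoris X)"
  unfolding t1_space_def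
proof (intro ballI impI)
  fix K K' assume K: "K \<in> topspace (vietoris X)" and K': "K' \<in> topspace (vietoris X)" and ne: "K \<noteq> K'"
  have cK: "compactin X K" and cK': "compactin X K'" using K K' by (auto simp: compacts_def)
  show "\<exists>U. openin (vietoris X) U \<and> K \<in> U \<and> K' \<notin> U"
  proof (cases "K \<subseteq> K'")
    case False
    then obtain x where x: "x \<in> K" "x \<notin> K'" by auto
    have "openin X (topspace X - K')"
      using compactin_imp_closedin[OF assms cK'] by (simp add: closedin_def)
    moreover have "x \<in> topspace X" using x cK compactin_subset_topspace by blast
    ultimately show ?thesis using x K
      by (rule_tac x="{L \<in> compacts X. L \<inter> (topspace X - K') \<noteq> {}}" in exI)
         (auto intro: openin_vietoris_lower)
  next
    case True
    then obtain x where x: "x \<in> K'" "x \<notin> K" using ne by auto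
    have xt: "x \<in> topspace X" using x cK' compactin_subset_topspace by blast
    have "openin X (topspace X - {x})"
      using closedin_t1_singleton[OF Hausdorff_imp_t1_space[OF assms] xt] by (simp add: closedin_def)
    moreover have "K \<subseteq> topspace X - {x}" using x cK compactin_subset_topspace by blast
    ultimately show ?thesis using x K
      by (rule_tac x="{L \<in> compacts X. L \<subseteq> (topspace X - {x})}" in exI)
         (auto intro: openin_vietoris_upper)
  qed
qed

lemma compact_nbhd:
  assumes "Hausdorff_space X" "locally_compact_space X" "compactin X K"
  obtains U L where "openin X U" "compactin X L" "K \<subseteq> U" "U \<subseteq> L"
proof -
  have "\<exists>U L. openin X U \<and> compactin X L \<and> closedin X L \<and> K \<subseteq> U \<and> U \<subseteq> L"
    using locally_compact_space_compact_closed_compact[of X] assms by blast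
  then show ?thesis using that by blast
qed

lemma big_subset:
  fixes D :: "'b set" and C :: "'k set"
  assumes "\<not> ordLeq2 (card_of D) (card_of C)"
  obtains S where "S \<subseteq> D" "ordIso2 (card_of S) (cardSuc (card_of C))"
proof -
  have lt: "ordLess2 (card_of C) (card_of D)"
    using assms not_ordLeq_iff_ordLess[of "card_of C" "card_of D", OF card_of_Well_order card_of_Well_order]
    by simp
  have le: "ordLeq2 (cardSuc (card_of C)) (card_of D)"
    by (rule cardSuc_least[OF card_of_Card_order card_of_Card_order lt])
  let ?F = "Field (cardSuc (card_of C))"
  have iso: "ordIso2 (card_of ?F) (cardSuc (card_of C))"
    by (rule card_of_Field_ordIso[OF cardSuc_Card_order[OF card_of_Card_order]])
  have "ordLeq2 (card_of ?F) (card_of D)" by (rule ordIso_ordLeq_trans[OF iso le])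
  then have "\<exists>f. inj_on f ?F \<and> f ` ?F \<subseteq> D" by (rule card_of_ordLeq[THEN iffD2])
  then obtain f where f: "inj_on f ?F" "f ` ?F \<subseteq> D" by (elim exE conjE)
  have "bij_betw f ?F (f ` ?F)" by (rule bij_betw_imageI[OF f(1) refl])
  then have i2: "ordIso2 (card_of ?F) (card_of (f ` ?F))" by (rule card_of_ordIso[THEN iffD1, OF exI])
  have "ordIso2 (card_of (f ` ?F)) (cardSuc (card_of C))"
    by (rule ordIso_transitive[OF ordIso_symmetric[OF i2] iso])
  then show ?thesis using that f(2) by blast
qed

theorem mainTheorem6:
  fixes X :: "'a topology" and C :: "'k set"
  assumes "Hausdorff_space X" and "completely_regular_space X"
    and "locally_compact_space X"
    and "infinite C"
  shows "calibre_succ_omega (compacts X) C \<longleftrightarrow> extent_le (vietoris X) C"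
proof
  assume cal: "calibre_succ_omega (compacts X) C"
  show "extent_le (vietoris X) C"
    unfolding extent_le_def
  proof (intro allI impI)
    fix D assume cd: "closed_discrete_in (vietoris X) D"
    show "ordLeq2 (card_of D) (card_of C)"
    proof (rule ccontr)
      assume "\<not> ordLeq2 (card_of D) (card_of C)"
      then obtain S where S: "S \<subseteq> D" "ordIso2 (card_of S) (cardSuc (card_of C))"
        using big_subset by blast
      have "D \<subseteq> compacts X"
        using cd closedin_subset unfolding closed_discrete_in_def by fastforce
      then have "S \<subseteq> compacts X" using S(1) by blast
      then have "\<exists>T\<subseteq>S. infinite T \<and> countable T \<and> (\<exists>u\<in>compacts X. \<forall>t\<in>T. t \<subseteq> u)"
        using cal S(2) unfolding calibre_succ_omega_def by blast
      then obtain T u where T: "T \<subseteq> S" "infinite T" and u: "u \<in> compacts X" "\<forall>t \<in> T. t \<subseteq> u"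
        by blast
      have cdT: "closed_discrete_in (vietoris X) T"
        using closed_discrete_subset[OF cd] S(1) T(1) by blast
      have "T \<subseteq> {K \<in> compacts X. K \<subseteq> u}" using T(1) S(1) \<open>D \<subseteq> compacts X\<close> u by blast
      moreover have "compactin (vietoris X) {K \<in> compacts X. K \<subseteq> u}"
        using compactin_vietoris_below u by (simp add: compacts_def)
      ultimately have "finite T" using closed_discrete_compact_finite[OF cdT] by blast
      then show False using T(2) by blast
    qed
  qed
next
  assume ext: "extent_le (vietoris X) C"
  show "calibre_succ_omega (compacts X) C"
    unfolding calibre_succ_omega_def
  proof (intro allI impI)
    fix S assume Ssub: "S \<subseteq> compacts X" and Scard: "ordIso2 (card_of S) (cardSuc (card_of C))"
    show "\<exists>T\<subseteq>S. infinite T \<and> countable T \<and> (\<exists>u\<in>compacts X. \<forall>t\<in>T. t \<subseteq> u)"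
    proof (rule ccontr)
      assume no: "\<not> ?thesis"
      have t1: "t1_space (vietoris X)" using t1_vietoris assms(1) by blast
      have nb: "\<exists>W. openin (vietoris X) W \<and> K \<in> W \<and> W \<inter> S \<subseteq> {K}" if K: "K \<in> compacts X" for K
      proof -
        have cK: "compactin X K" using K by (simp add: compacts_def)
        obtain U L where UL: "openin X U" "compactin X L" "K \<subseteq> U" "U \<subseteq> L"
          using compact_nbhd[OF assms(1) assms(3) cK] by blast
        define W0 where "W0 = {K' \<in> compacts X. K' \<subseteq> U}"
        have oW0: "openin (vietoris X) W0" unfolding W0_def using UL(1) by (rule openin_vietoris_upper)
        have KW0: "K \<in> W0" unfolding W0_def using K UL by blast
        have fin: "finite (W0 \<inter> S)"
        proof (rule ccontr)
          assume "infinite (W0 \<inter> S)"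
          then obtain T where T: "T \<subseteq> W0 \<inter> S" "countable T" "infinite T"
            using infinite_countable_subset' by blast
          have "L \<in> compacts X" using UL(2) by (simp add: compacts_def)
          moreover have "\<forall>t\<in>T. t \<subseteq> L" using T(1) UL(4) unfolding W0_def by blast
          ultimately show False using no T by blast
        qed
        define E where "E = W0 \<inter> S - {K}"
        have "closedin (vietoris X) E"
          using t1 fin Ssub unfolding t1_space_closedin_finite E_def by auto
        then have "openin (vietoris X) (W0 - E)" using oW0 by (simp add: openin_diff)
        moreover have "K \<in> W0 - E" using KW0 unfolding E_def by blast
        moreover have "(W0 - E) \<inter> S \<subseteq> {K}" unfolding E_def by blast
        ultimately show ?thesis by blast
      qed
      have "closed_discrete_in (vietoris X) S"
        unfolding closed_discrete_in_def closedin_def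
      proof (intro conjI ballI)
        show "S \<subseteq> topspace (vietoris X)" using Ssub by simp
        show "openin (vietoris X) (topspace (vietoris X) - S)"
        proof (subst openin_subopen, intro ballI)
          fix K assume K: "K \<in> topspace (vietoris X) - S"
          then obtain W where W: "openin (vietoris X) W" "K \<in> W" "W \<inter> S \<subseteq> {K}" using nb[of K] by auto
          have "W \<subseteq> topspace (vietoris X) - S" using W K openin_subset[OF W(1)] by blast
          then show "\<exists>T. openin (vietoris X) T \<and> K \<in> T \<and> T \<subseteq> topspace (vietoris X) - S"
            using W by blast
        qed
        fix d assume d: "d \<in> S"
        then obtain W where W: "openin (vietoris X) W" "d \<in> W" "W \<inter> S \<subseteq> {d}" using nb Ssub by blast
        then have "W \<inter> S = {d}" using d by blast
        then show "\<exists>U. openin (vietoris X) U \<and> U \<inter> S = {d}" using W(1) by blast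
      qed
      then have le: "ordLeq2 (card_of S) (card_of C)" using ext unfolding extent_le_def by blast
      have lt: "ordLess2 (card_of C) (card_of S)"
        by (rule ordLess_ordIso_trans[OF cardSuc_greater[OF card_of_Card_order] ordIso_symmetric[OF Scard]])
      show False using not_ordLess_ordLeq[OF lt] le by simp
    qed
  qed
qed

end
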